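(* Consider a general POVM attack on single-photon SARG04: Eve uses a POVM $\{M_{\mathrm{vac}},M_0,\dots,M_{J-1}\}$ on $\mathbb{C}^2$ (positive operators with $M_{\mathrm{vac}}+\sum_iM_i=I$, $J$ arbitrary) and, on outcome $i$, sends Bob an arbitrary qubit state $|\sigma_i\rangle$ (on outcome vac she sends nothing). The resulting unnormalized state of Alice and Bob is $$\rho_{AB}=\sum_{k=0}^{3}\sum_{i=0}^{J-1}\operatorname{Tr}_{E}\!\Big[(I_A\otimes M_i)(I_A\otimes R^k)|\Psi\rangle\langle\Psi|(I_A\otimes R^{-k})\Big]\otimes F R^{-k}|\sigma_i\rangle\langle\sigma_i|R^{k}F^\dagger,$$ with $|\Psi\rangle=|0_z\rangle_A|\varphi_0\rangle_E+|1_z\rangle_A|\varphi_1\rangle_E$, and the induced bit error rate (defined when $\operatorname{Tr}\rho_{AB}>0$) is $$e_b=\frac{\langle0_z1_z|\rho_{AB}|0_z1_z\rangle+\langle1_z0_z|\rho_{AB}|1_z0_z\rangle}{\operatorname{Tr}\rho_{AB}}.$$ Then the smallest bit error rate $e_b$ that Eve can induce by such an attack is $\tfrac13$.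
   Context: Qubits use bases related by $|0_x\rangle=(|0_z\rangle+|1_z\rangle)/\sqrt2$, $|1_x\rangle=(|0_z\rangle-|1_z\rangle)/\sqrt2$. Let $|\varphi_0\rangle=\cos(\pi/8)|0_x\rangle+\sin(\pi/8)|1_x\rangle$, $R=\cos(\pi/4)I+\sin(\pi/4)(|1_x\rangle\langle0_x|-|0_x\rangle\langle1_x|)$, $|\varphi_m\rangle=R^{-m}|\varphi_0\rangle$ (indices mod 4), and $F=\sin(\pi/8)|0_x\rangle\langle0_x|+\cos(\pi/8)|1_x\rangle\langle1_x|$ (Bob's successful filtering, i.e. conclusive result). Alice applies the random rotation $R^k$, $k\in\{0,1,2,3\}$ uniformly, to the transmitted qubit; Bob applies $R^{-k}$ then $F$. $\operatorname{Tr}_E$ is the partial trace over the transmitted qubit. *)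

theory Defs
  imports "HOL-Analysis.Analysis"
begin

type_synonym qvec = "complex^2"
type_synonym qop = "complex^2^2"
type_synonym qop2 = "complex^(2 \<times> 2)^(2 \<times> 2)"

definition z0 :: qvec where "z0 = (\<chi> i. if i = 0 then 1 else 0)"
definition z1 :: qvec where "z1 = (\<chi> i. if i = 1 then 1 else 0)"
definition x0 :: qvec where "x0 = (1 / sqrt 2) *\<^sub>R (z0 + z1)"
definition x1 :: qvec where "x1 = (1 / sqrt 2) *\<^sub>R (z0 - z1)"

definition outer :: "complex^'n::finite \<Rightarrow> complex^'n::finite \<Rightarrow> complex^'n::finite^'n::finite"
  where "outer v w = (\<chi> i j. v$i * cnj (w$j))"

definition adj :: "complex^'n::finite^'m::finite \<Rightarrow> complex^'m::finite^'n::finite"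
  where "adj A = (\<chi> i j. cnj (A$j$i))"

definition braket :: "complex^'n::finite \<Rightarrow> complex^'n::finite \<Rightarrow> complex"
  where "braket v w = (\<Sum>i\<in>UNIV. cnj (v$i) * w$i)"

definition kron :: "complex^'n::finite^'n::finite \<Rightarrow> complex^'m::finite^'m::finite \<Rightarrow> complex^('n::finite \<times> 'm::finite)^('n::finite \<times> 'm::finite)"
  where "kron A B = (\<chi> p q. A$fst p$fst q * B$snd p$snd q)"

definition kronv :: "complex^'n::finite \<Rightarrow> complex^'m::finite \<Rightarrow> complex^('n::finite \<times> 'm::finite)"
  where "kronv v w = (\<chi> p. v$fst p * w$snd p)"

definition ptrace2 :: "complex^('n::finite \<times> 'm::finite)^('n::finite \<times> 'm::finite) \<Rightarrow> complex^'n::finite^'n::finite"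
  where "ptrace2 X = (\<chi> i k. \<Sum>j\<in>UNIV. X$(i,j)$(k,j))"

definition positive_op :: "complex^'n::finite^'n::finite \<Rightarrow> bool"
  where "positive_op A \<longleftrightarrow> (\<forall>v. braket v (A *v v) \<in> \<real> \<and> 0 \<le> Re (braket v (A *v v)))"

definition smul :: "complex \<Rightarrow> complex^'n::finite^'m::finite \<Rightarrow> complex^'n::finite^'m::finite"
  where "smul c A = (\<chi> i j. c * A$i$j)"

primrec mpow :: "complex^'n::finite^'n::finite \<Rightarrow> nat \<Rightarrow> complex^'n::finite^'n::finite" where
  "mpow A 0 = mat 1"
| "mpow A (Suc n) = A ** mpow A n"

definition Rot :: qop where
  "Rot = smul (complex_of_real (cos (pi/4))) (mat 1)
        + smul (complex_of_real (sin (pi/4))) (outer x1 x0 - outer x0 x1)"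

definition Rinv :: qop where
  "Rinv = matrix_inv Rot"

definition phi0 :: qvec where
  "phi0 = cos (pi/8) *\<^sub>R x0 + sin (pi/8) *\<^sub>R x1"

definition phi :: "nat \<Rightarrow> qvec" where
  "phi m = mpow Rinv m *v phi0"

definition Filt :: qop where
  "Filt = smul (complex_of_real (sin (pi/8))) (outer x0 x0) + smul (complex_of_real (cos (pi/8))) (outer x1 x1)"

definition Psi :: "complex^(2 \<times> 2)" where
  "Psi = kronv z0 (phi 0) + kronv z1 (phi 1)"

definition rhoAB :: "nat \<Rightarrow> (nat \<Rightarrow> qop) \<Rightarrow> (nat \<Rightarrow> qvec) \<Rightarrow> qop2" where
  "rhoAB J M \<sigma> = (\<Sum>k<4. \<Sum>i<J.
      kron (ptrace2 (kron (mat 1) (M i) ** kron (mat 1) (mpow Rot k) ** outer Psi Psi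
                      ** kron (mat 1) (mpow Rinv k)))
           (Filt ** mpow Rinv k ** outer (\<sigma> i) (\<sigma> i) ** mpow Rot k ** adj Filt))"

definition bit_error :: "qop2 \<Rightarrow> real" where
  "bit_error \<rho> = Re ((braket (kronv z0 z1) (\<rho> *v kronv z0 z1)
                     + braket (kronv z1 z0) (\<rho> *v kronv z1 z0)) / trace \<rho>)"

definition valid_attack :: "nat \<Rightarrow> qop \<Rightarrow> (nat \<Rightarrow> qop) \<Rightarrow> (nat \<Rightarrow> qvec) \<Rightarrow> bool" where
  "valid_attack J Mvac M \<sigma> \<longleftrightarrow>
     positive_op Mvac \<and> (\<forall>i<J. positive_op (M i)) \<and>
     Mvac + (\<Sum>i<J. M i) = mat 1 \<and> (\<forall>i<J. norm (\<sigma> i) = 1)"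

end

theory Submission
  imports Defs
begin

lemma two_UNIV: "(UNIV::2 set) = {0,1}"
  using exhaust_2 by (auto, metis zero_neq_one)
lemma sum2: "sum f (UNIV::2 set) = f 0 + f 1" by (simp add: two_UNIV)
lemma all2: "(\<forall>i::2. P i) \<longleftrightarrow> P 0 \<and> P 1" by (metis (full_types) UNIV_I insertE singletonD two_UNIV)

definition mk2 :: "complex \<Rightarrow> complex \<Rightarrow> complex \<Rightarrow> complex \<Rightarrow> qop" where
  "mk2 a b c d = (\<chi> i j. if i = 0 then (if j = 0 then a else b) else (if j = 0 then c else d))"
definition mkv :: "complex \<Rightarrow> complex \<Rightarrow> qvec" where
  "mkv a b = (\<chi> i. if i = 0 then a else b)"

lemma mk2_nth[simp]: "mk2 a b c d $ 0 $ 0 = a" "mk2 a b c d $ 0 $ 1 = b"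
  "mk2 a b c d $ 1 $ 0 = c" "mk2 a b c d $ 1 $ 1 = d"
  by (simp_all add: mk2_def)
lemma mkv_nth[simp]: "mkv a b $ 0 = a" "mkv a b $ 1 = b"
  by (simp_all add: mkv_def)

lemma mat_eq2: "(X::qop) = Y \<longleftrightarrow> X$0$0 = Y$0$0 \<and> X$0$1 = Y$0$1 \<and> X$1$0 = Y$1$0 \<and> X$1$1 = Y$1$1"
  by (auto simp: vec_eq_iff all2)
lemma vec_eq2: "(x::qvec) = y \<longleftrightarrow> x$0 = y$0 \<and> x$1 = y$1"
  by (auto simp: vec_eq_iff all2)

lemma mk2_mult: "mk2 a b c d ** mk2 a' b' c' d' = mk2 (a*a'+b*c') (a*b'+b*d') (c*a'+d*c') (c*b'+d*d')"
  by (simp add: mat_eq2 matrix_matrix_mult_def sum2)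
lemma mk2_mulv: "mk2 a b c d *v mkv x y = mkv (a*x+b*y) (c*x+d*y)"
  by (simp add: vec_eq2 matrix_vector_mult_def sum2)
lemma mk2_add: "mk2 a b c d + mk2 a' b' c' d' = mk2 (a+a') (b+b') (c+c') (d+d')"
  by (simp add: mat_eq2)
lemma mk2_diff: "mk2 a b c d - mk2 a' b' c' d' = mk2 (a-a') (b-b') (c-c') (d-d')"
  by (simp add: mat_eq2)
lemma mk2_smul: "smul k (mk2 a b c d) = mk2 (k*a) (k*b) (k*c) (k*d)"
  by (simp add: mat_eq2 smul_def)
lemma mat1_mk2: "(mat 1 :: qop) = mk2 1 0 0 1"
  by (simp add: mat_eq2 mat_def)
lemma outer_mkv: "outer (mkv a b) (mkv a' b') = mk2 (a*cnj a') (a*cnj b') (b*cnj a') (b*cnj b')"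
  by (simp add: mat_eq2 outer_def)
lemma adj_mk2: "adj (mk2 a b c d) = mk2 (cnj a) (cnj c) (cnj b) (cnj d)"
  by (simp add: mat_eq2 adj_def)
lemma transpose_mk2: "transpose (mk2 a b c d) = mk2 a c b d"
  by (simp add: mat_eq2 transpose_def)
lemma scaleR_mkv: "r *\<^sub>R mkv a b = mkv (of_real r * a) (of_real r * b)"
  unfolding vec_eq2 vector_scaleR_component by (simp add: scaleR_conv_of_real)
lemma mkv_add: "mkv a b + mkv a' b' = mkv (a+a') (b+b')" by (simp add: vec_eq2)
lemma mkv_diff: "mkv a b - mkv a' b' = mkv (a-a') (b-b')" by (simp add: vec_eq2)

lemma z0_mkv: "z0 = mkv 1 0" by (simp add: vec_eq2 z0_def)
lemma z1_mkv: "z1 = mkv 0 1" by (simp add: vec_eq2 z1_def)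

definition t :: real where "t = sqrt 2"
definition C8 :: real where "C8 = cos (pi/8)"
definition S8 :: real where "S8 = sin (pi/8)"

lemma t2: "t*t = 2" by (simp add: t_def)
lemma t_pos: "t > 0" by (simp add: t_def)
lemma cc_pos: "C8 > 0" unfolding C8_def by (rule cos_gt_zero) (auto simp: pi_gt_zero)
lemma ss_pos: "S8 > 0" unfolding S8_def by (rule sin_gt_zero) (auto simp: pi_gt_zero)
lemma C8_2: "C8*C8 = (2+t)/4"
proof -
  have "cos (2*(pi/8)) = 2 * cos (pi/8)^2 - 1" by (rule cos_double_cos)
  then have "t/2 = 2*(C8*C8) - 1" by (simp add: C8_def t_def cos_45 power2_eq_square)
  then show ?thesis by simp
qed
lemma S8_2: "S8*S8 = (2-t)/4"
proof -
  have "S8^2 + C8^2 = 1" by (simp add: S8_def C8_def)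
  then have "S8*S8 = 1 - C8*C8" by (simp add: power2_eq_square)
  then show ?thesis using C8_2 by (simp add: field_simps)
qed
lemma ccss: "C8*S8 = t/4"
proof -
  have "sin (2*(pi/8)) = 2 * sin (pi/8) * cos (pi/8)" by (rule sin_double)
  then have "t/2 = 2*S8*C8" by (simp add: C8_def S8_def t_def sin_45)
  then show ?thesis by (simp add: mult.commute)
qed
lemma sscc: "S8*C8 = t/4" using ccss by (simp add: mult.commute)
lemma cpluss: "C8 + S8 = t*C8"
proof -
  have "(C8+S8)^2 = (t*C8)^2"
    by (simp add: power2_eq_square algebra_simps C8_2 S8_2 ccss sscc)
       (simp add: mult.assoc[symmetric] t2 C8_2, simp add: field_simps)
  then show ?thesis using cc_pos ss_pos t_pos by (simp add: power2_eq_iff_nonneg)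
qed
lemma cminuss: "C8 - S8 = t*S8"
proof -
  have "(C8-S8)^2 = (t*S8)^2"
    by (simp add: power2_eq_square algebra_simps C8_2 S8_2 ccss sscc)
       (simp add: mult.assoc[symmetric] t2 S8_2, simp add: field_simps)
  moreover have "C8 - S8 > 0"
  proof -
    have "(C8-S8)*(C8+S8) = t/2" by (simp add: algebra_simps C8_2 S8_2) (simp add: field_simps)
    then have "(C8-S8)*(C8+S8) > 0" using t_pos by simp
    moreover have "C8+S8 > 0" using cc_pos ss_pos by simp
    ultimately show ?thesis by (simp add: zero_less_mult_iff)
  qed
  ultimately show ?thesis using cc_pos ss_pos t_pos by (simp add: power2_eq_iff_nonneg)
qed
lemma t_sq: "t^2 = 2" "t^3 = 2*t" using t2 by (simp_all add: power2_eq_square power3_eq_cube)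
lemma inv_sqrt2: "1 / sqrt 2 = t/2"
  by (simp add: t_def field_simps)

definition mk2r :: "real \<Rightarrow> real \<Rightarrow> real \<Rightarrow> real \<Rightarrow> qop" where
  "mk2r a b c d = mk2 (of_real a) (of_real b) (of_real c) (of_real d)"
definition mkvr :: "real \<Rightarrow> real \<Rightarrow> qvec" where
  "mkvr a b = mkv (of_real a) (of_real b)"

lemma mk2r_mult: "mk2r a b c d ** mk2r a' b' c' d' = mk2r (a*a'+b*c') (a*b'+b*d') (c*a'+d*c') (c*b'+d*d')"
  by (simp add: mk2r_def mk2_mult)
lemma mk2r_mulv: "mk2r a b c d *v mkvr x y = mkvr (a*x+b*y) (c*x+d*y)"
  by (simp add: mk2r_def mkvr_def mk2_mulv)
lemma mk2r_add: "mk2r a b c d + mk2r a' b' c' d' = mk2r (a+a') (b+b') (c+c') (d+d')"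
  by (simp add: mk2r_def mk2_add)
lemma mk2r_diff: "mk2r a b c d - mk2r a' b' c' d' = mk2r (a-a') (b-b') (c-c') (d-d')"
  by (simp add: mk2r_def mk2_diff)
lemma mk2r_smul: "smul (of_real k) (mk2r a b c d) = mk2r (k*a) (k*b) (k*c) (k*d)"
  by (simp add: mk2r_def mk2_smul)
lemma mat1_mk2r: "(mat 1 :: qop) = mk2r 1 0 0 1"
  by (simp add: mk2r_def mat1_mk2)
lemma outer_mkvr: "outer (mkvr a b) (mkvr a' b') = mk2r (a*a') (a*b') (b*a') (b*b')"
  by (simp add: mk2r_def mkvr_def outer_mkv)
lemma adj_mk2r: "adj (mk2r a b c d) = mk2r a c b d"
  by (simp add: mk2r_def adj_mk2)
lemma transpose_mk2r: "transpose (mk2r a b c d) = mk2r a c b d"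
  by (simp add: mk2r_def transpose_mk2)
lemma scaleR_mkvr: "r *\<^sub>R mkvr a b = mkvr (r*a) (r*b)"
  by (simp add: mkvr_def scaleR_mkv)
lemma mkvr_add: "mkvr a b + mkvr a' b' = mkvr (a+a') (b+b')" by (simp add: mkvr_def mkv_add)
lemma mkvr_diff: "mkvr a b - mkvr a' b' = mkvr (a-a') (b-b')" by (simp add: mkvr_def mkv_diff)
lemma mk2r_cong: "a=a' \<Longrightarrow> b=b' \<Longrightarrow> c=c' \<Longrightarrow> d=d' \<Longrightarrow> mk2r a b c d = mk2r a' b' c' d'" by simp
lemma mkvr_cong: "a=a' \<Longrightarrow> b=b' \<Longrightarrow> mkvr a b = mkvr a' b'" by simp

lemma z0r: "z0 = mkvr 1 0" by (simp add: z0_mkv mkvr_def)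
lemma z1r: "z1 = mkvr 0 1" by (simp add: z1_mkv mkvr_def)
lemma x0r: "x0 = mkvr (t/2) (t/2)" by (simp add: x0_def z0r z1r mkvr_add scaleR_mkvr inv_sqrt2)
lemma x1r: "x1 = mkvr (t/2) (-t/2)" by (simp add: x1_def z0r z1r mkvr_diff scaleR_mkvr inv_sqrt2)

lemma Rot_r: "Rot = mk2r (t/2) (t/2) (-t/2) (t/2)"
  unfolding Rot_def x0r x1r outer_mkvr mk2r_diff mat1_mk2r mk2r_smul mk2r_add cos_45 sin_45 t_def[symmetric]
  by (rule mk2r_cong) (simp_all add: field_simps t_sq t2)

definition Ri :: qop where "Ri = mk2r (t/2) (-t/2) (t/2) (t/2)"
lemma Rot_Ri1: "Rot ** Ri = mat 1"
  unfolding Rot_r Ri_def mk2r_mult mat1_mk2r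
  by (rule mk2r_cong; simp add: field_simps t2)
lemma Rot_Ri2: "Ri ** Rot = mat 1"
  unfolding Rot_r Ri_def mk2r_mult mat1_mk2r
  by (rule mk2r_cong; simp add: field_simps t2)
lemmas Rot_Ri = Rot_Ri1 Rot_Ri2

lemma inv_unique:
  fixes A B :: qop
  assumes "A ** B = mat 1" "B ** A = mat 1"
  shows "matrix_inv A = B"
proof -
  let ?B' = "matrix_inv A"
  have "A ** ?B' = mat 1 \<and> ?B' ** A = mat 1"
    unfolding matrix_inv_def by (rule someI[where x=B]) (use assms in simp)
  then have "?B' = ?B' ** (A ** B)" using assms by (simp add: matrix_mul_rid)
  also have "... = B" using \<open>A ** ?B' = mat 1 \<and> ?B' ** A = mat 1\<close>
    by (simp add: matrix_mul_assoc matrix_mul_lid)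
  finally show ?thesis .
qed
lemma Rinv_r: "Rinv = Ri" unfolding Rinv_def by (rule inv_unique) (simp_all add: Rot_Ri)


lemma hp0: "t*C8 + t*S8 = 2*C8"
proof -
  have "t*C8 + t*S8 = t*(C8+S8)" by (simp add: distrib_left)
  also have "... = (t*t)*C8" by (simp add: cpluss mult.assoc)
  finally show ?thesis by (simp add: t2)
qed
lemma hm0: "t*C8 - t*S8 = 2*S8"
proof -
  have "t*C8 - t*S8 = t*(C8-S8)" by (simp add: right_diff_distrib)
  also have "... = (t*t)*S8" by (simp add: cminuss mult.assoc)
  finally show ?thesis by (simp add: t2)
qed
lemma hp: "t*C8 + t*S8 = 2*C8" "C8*t + S8*t = 2*C8" using hp0 by (simp_all add: mult.commute)
lemma hm: "t*C8 - t*S8 = 2*S8" "C8*t - S8*t = 2*S8" using hm0 by (simp_all add: mult.commute)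

lemma mpow_Rot: "mpow Rot 0 = mk2r 1 0 0 1" "mpow Rot 1 = mk2r (t/2) (t/2) (-t/2) (t/2)"
  "mpow Rot 2 = mk2r 0 1 (-1) 0" "mpow Rot 3 = mk2r (-t/2) (t/2) (-t/2) (-t/2)"
proof -
  show a: "mpow Rot 0 = mk2r 1 0 0 1" by (simp add: mat1_mk2r)
  show b: "mpow Rot 1 = mk2r (t/2) (t/2) (-t/2) (t/2)" by (simp add: mat1_mk2r Rot_r mk2r_mult)
  have "mpow Rot 2 = Rot ** mpow Rot 1" by (simp add: numeral_2_eq_2)
  also have "... = mk2r 0 1 (-1) 0" unfolding b unfolding Rot_r mk2r_mult
    by (rule mk2r_cong; simp add: field_simps t2)
  finally show c: "mpow Rot 2 = mk2r 0 1 (-1) 0" .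
  have "mpow Rot 3 = Rot ** mpow Rot 2" by (simp add: numeral_3_eq_3 numeral_2_eq_2)
  also have "... = mk2r (-t/2) (t/2) (-t/2) (-t/2)" unfolding c unfolding Rot_r mk2r_mult
    by (rule mk2r_cong; simp)
  finally show "mpow Rot 3 = mk2r (-t/2) (t/2) (-t/2) (-t/2)" .
qed

lemma mpow_Rinv: "mpow Rinv 0 = mk2r 1 0 0 1" "mpow Rinv 1 = mk2r (t/2) (-t/2) (t/2) (t/2)"
  "mpow Rinv 2 = mk2r 0 (-1) 1 0" "mpow Rinv 3 = mk2r (-t/2) (-t/2) (t/2) (-t/2)"
proof -
  show a: "mpow Rinv 0 = mk2r 1 0 0 1" by (simp add: mat1_mk2r)
  show b: "mpow Rinv 1 = mk2r (t/2) (-t/2) (t/2) (t/2)" by (simp add: mat1_mk2r Rinv_r Ri_def mk2r_mult)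
  have "mpow Rinv 2 = Rinv ** mpow Rinv 1" by (simp add: numeral_2_eq_2)
  also have "... = mk2r 0 (-1) 1 0" unfolding b unfolding Rinv_r Ri_def mk2r_mult
    by (rule mk2r_cong; simp add: field_simps t2)
  finally show c: "mpow Rinv 2 = mk2r 0 (-1) 1 0" .
  have "mpow Rinv 3 = Rinv ** mpow Rinv 2" by (simp add: numeral_3_eq_3 numeral_2_eq_2)
  also have "... = mk2r (-t/2) (-t/2) (t/2) (-t/2)" unfolding c unfolding Rinv_r Ri_def mk2r_mult
    by (rule mk2r_cong; simp)
  finally show "mpow Rinv 3 = mk2r (-t/2) (-t/2) (t/2) (-t/2)" .
qed

lemma phi0_r: "phi0 = mkvr C8 S8"
  unfolding phi0_def x0r x1r scaleR_mkvr mkvr_add C8_def[symmetric] S8_def[symmetric]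
  by (rule mkvr_cong; simp add: field_simps hp hm)
lemma phi_r0: "phi 0 = mkvr C8 S8"
  by (simp add: phi_def phi0_r)
lemma phi_r1: "phi 1 = mkvr S8 C8"
proof -
  have "phi 1 = mpow Rinv 1 *v phi0" by (simp add: phi_def)
  also have "... = mkvr S8 C8" unfolding mpow_Rinv phi0_r mk2r_mulv
    by (rule mkvr_cong; simp add: field_simps hp hm)
  finally show ?thesis .
qed
lemmas phi_r = phi_r0 phi_r1
lemma cs_forms: "C8 * 2 + S8 * 2 = C8 * (t * 2)" "S8 + S8*t = C8"
  using cpluss cminuss by (simp_all add: algebra_simps)

lemma Filt_r: "Filt = mk2r (t/2*C8) (-(t/2*S8)) (-(t/2*S8)) (t/2*C8)"
  unfolding Filt_def x0r x1r outer_mkvr mk2r_smul mk2r_add C8_def[symmetric] S8_def[symmetric]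
  by (rule mk2r_cong; simp add: field_simps hp hm t2 cs_forms)

lemma CS1: "C8 = (1+t)*S8" using cminuss by (simp add: algebra_simps)
lemma tt2: "t*(t*x) = 2*x" by (simp add: mult.assoc[symmetric] t2)
lemma phi_r1': "phi (Suc 0) = mkvr S8 C8" using phi_r1 by simp
lemmas num_simps = CS1 t2 tt2

definition wv :: "complex^('n::finite \<times> 'm::finite) \<Rightarrow> 'n \<Rightarrow> complex^'m" where
  "wv W a = (\<chi> l. W$(a,l))"
definition cnjv :: "complex^'m::finite \<Rightarrow> complex^'m" where
  "cnjv v = (\<chi> l. cnj (v$l))"

lemma sum_pair: "(\<Sum>p\<in>(UNIV::('a::finite\<times>'b::finite) set). f p) = (\<Sum>x\<in>UNIV. \<Sum>y\<in>UNIV. f (x,y))"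
  by (metis UNIV_Times_UNIV sum.cartesian_product')

lemma kron_mult:
  fixes A C :: "complex^'n::finite^'n" and B D :: "complex^'m::finite^'m"
  shows "kron A B ** kron C D = kron (A ** C) (B ** D)"
proof -
  have "(kron A B ** kron C D)$p$q = (kron (A ** C) (B ** D))$p$q" for p q
  proof -
    have "(kron A B ** kron C D)$p$q = (\<Sum>x\<in>UNIV. \<Sum>y\<in>UNIV. (A$fst p$x * C$x$fst q) * (B$snd p$y * D$y$snd q))"
      unfolding kron_def matrix_matrix_mult_def by (simp add: sum_pair algebra_simps)
    also have "... = (\<Sum>x\<in>UNIV. A$fst p$x * C$x$fst q) * (\<Sum>y\<in>UNIV. B$snd p$y * D$y$snd q)"
      by (simp add: sum_product)
    finally show ?thesis unfolding kron_def matrix_matrix_mult_def by simp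
  qed
  then show ?thesis by (simp add: vec_eq_iff)
qed

lemma if_mult0: "(if P then u else 0) * (y::complex) = (if P then u*y else 0)" by simp
lemma mult_if0: "(y::complex) * (if P then u else 0) = (if P then y*u else 0)" by simp
lemma sum_if0: "(\<Sum>l\<in>S. if P then g l else (0::complex)) = (if P then (\<Sum>l\<in>S. g l) else 0)" by simp

lemma kI_left:
  fixes P :: "complex^'m::finite^'m" and X :: "complex^'k::finite^('n::finite \<times> 'm)"
  shows "(kron (mat 1) P ** X)$(a,j)$q = (\<Sum>l\<in>UNIV. P$j$l * X$(a,l)$q)"
  unfolding matrix_matrix_mult_def kron_def mat_def
  by (simp add: sum_pair if_mult0 sum_if0 sum.delta)

lemma kI_right:
  fixes Q :: "complex^'m::finite^'m" and X :: "complex^('n::finite \<times> 'm)^'k::finite"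
  shows "(X ** kron (mat 1) Q)$p$(a,j) = (\<Sum>l\<in>UNIV. X$p$(a,l) * Q$l$j)"
  unfolding matrix_matrix_mult_def kron_def mat_def
  by (simp add: sum_pair if_mult0 mult_if0 sum_if0 sum.delta)

lemma GA:
  fixes P Q :: "complex^'m::finite^'m" and W :: "complex^('n::finite \<times> 'm)"
  shows "ptrace2 (kron (mat 1) P ** outer W W ** kron (mat 1) Q) $ a $ a
     = (\<Sum>j\<in>UNIV. (P *v wv W a)$j * (transpose Q *v cnjv (wv W a))$j)"
  unfolding ptrace2_def kI_right
  by (simp add: kI_left outer_def matrix_vector_mult_def transpose_def wv_def cnjv_def
     sum_distrib_left sum_distrib_right algebra_simps)

lemma GB:
  fixes P Q :: "complex^'m::finite^'m" 
  shows "(P ** outer s s ** Q) $ b $ b = (P *v s)$b * (transpose Q *v cnjv s)$b"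
  by (simp add: matrix_matrix_mult_def outer_def matrix_vector_mult_def transpose_def cnjv_def
     sum_distrib_left sum_distrib_right algebra_simps)

definition Aq :: "qop \<Rightarrow> nat \<Rightarrow> 2 \<Rightarrow> complex" where
  "Aq M k a = ptrace2 (kron (mat 1) M ** kron (mat 1) (mpow Rot k) ** outer Psi Psi ** kron (mat 1) (mpow Rinv k)) $ a $ a"
definition Bq :: "qvec \<Rightarrow> nat \<Rightarrow> 2 \<Rightarrow> complex" where
  "Bq s k b = (Filt ** mpow Rinv k ** outer s s ** mpow Rot k ** adj Filt) $ b $ b"
definition Aform :: "qop \<Rightarrow> real \<Rightarrow> real \<Rightarrow> complex" where
  "Aform M al be = (M$0$0 * of_real al + M$0$1 * of_real be) * of_real al + (M$1$0 * of_real al + M$1$1 * of_real be) * of_real be"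
definition Bform :: "qvec \<Rightarrow> real \<Rightarrow> real \<Rightarrow> complex" where
  "Bform s al be = (of_real al * s$0 + of_real be * s$1) * (of_real al * cnj (s$0) + of_real be * cnj (s$1))"

lemma wv_Psi: "wv Psi 0 = mkvr C8 S8" "wv Psi 1 = mkvr S8 C8"
  by (simp_all add: vec_eq2 wv_def Psi_def kronv_def z0r z1r phi_r phi_r1' mkvr_def)
lemma cnjv_mkvr: "cnjv (mkvr a b) = mkvr a b" by (simp add: vec_eq2 cnjv_def mkvr_def)
lemma quad_mkvr: "(\<Sum>j\<in>UNIV. (M *v mkvr al be)$j * (mkvr al be)$j) = Aform M al be"
  by (simp add: sum2 matrix_vector_mult_def Aform_def mkvr_def)
lemma Aq_gen: "mpow Rot k *v w = v \<Longrightarrow> transpose (mpow Rinv k) *v cnjv w = v \<Longrightarrow> wv Psi a = w \<Longrightarrow>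
   Aq M k a = (\<Sum>j\<in>UNIV. (M *v v)$j * v$j)"
  unfolding Aq_def kron_mult matrix_mul_lid GA matrix_vector_mul_assoc[symmetric] by simp
lemma Bq_gen: "Filt ** mpow Rinv k = P \<Longrightarrow> transpose (mpow Rot k ** adj Filt) = P \<Longrightarrow>
   Bq s k b = (P *v s)$b * (P *v cnjv s)$b"
proof -
  assume a: "Filt ** mpow Rinv k = P" "transpose (mpow Rot k ** adj Filt) = P"
  have "Filt ** mpow Rinv k ** outer s s ** mpow Rot k ** adj Filt
      = (Filt ** mpow Rinv k) ** outer s s ** (mpow Rot k ** adj Filt)" by (simp add: matrix_mul_assoc)
  then have "Bq s k b = ((Filt ** mpow Rinv k) ** outer s s ** (mpow Rot k ** adj Filt))$b$b"
    unfolding Bq_def by simp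
  also have "... = ((Filt ** mpow Rinv k) *v s)$b * (transpose (mpow Rot k ** adj Filt) *v cnjv s)$b"
    by (rule GB)
  finally show ?thesis using a by simp
qed
lemma Bq_mk2r0: "(mk2r a b c d *v s)$0 * (mk2r a b c d *v cnjv s)$0 = Bform s a b"
  by (simp add: matrix_vector_mult_def sum2 mk2r_def cnjv_def Bform_def)
lemma Bq_mk2r1: "(mk2r a b c d *v s)$1 * (mk2r a b c d *v cnjv s)$1 = Bform s c d"
  by (simp add: matrix_vector_mult_def sum2 mk2r_def cnjv_def Bform_def)

lemma Aq_0_0: "Aq M 0 0 = Aform M C8 S8"
proof -
  have "mpow Rot 0 *v mkvr C8 S8 = mkvr C8 S8"
    unfolding mpow_Rot mk2r_mulv by (rule mkvr_cong; simp add: field_simps num_simps)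
  moreover have "transpose (mpow Rinv 0) *v cnjv (mkvr C8 S8) = mkvr C8 S8"
    unfolding mpow_Rinv cnjv_mkvr transpose_mk2r mk2r_mulv by (rule mkvr_cong; simp add: field_simps num_simps)
  ultimately show ?thesis using Aq_gen[OF _ _ wv_Psi(1)] quad_mkvr by metis
qed

lemma Aq_0_1: "Aq M 0 1 = Aform M S8 C8"
proof -
  have "mpow Rot 0 *v mkvr S8 C8 = mkvr S8 C8"
    unfolding mpow_Rot mk2r_mulv by (rule mkvr_cong; simp add: field_simps num_simps)
  moreover have "transpose (mpow Rinv 0) *v cnjv (mkvr S8 C8) = mkvr S8 C8"
    unfolding mpow_Rinv cnjv_mkvr transpose_mk2r mk2r_mulv by (rule mkvr_cong; simp add: field_simps num_simps)
  ultimately show ?thesis using Aq_gen[OF _ _ wv_Psi(2)] quad_mkvr by metis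
qed

lemma Aq_1_0: "Aq M 1 0 = Aform M C8 (-S8)"
proof -
  have "mpow Rot 1 *v mkvr C8 S8 = mkvr C8 (-S8)"
    unfolding mpow_Rot mk2r_mulv by (rule mkvr_cong; simp add: field_simps num_simps)
  moreover have "transpose (mpow Rinv 1) *v cnjv (mkvr C8 S8) = mkvr C8 (-S8)"
    unfolding mpow_Rinv cnjv_mkvr transpose_mk2r mk2r_mulv by (rule mkvr_cong; simp add: field_simps num_simps)
  ultimately show ?thesis using Aq_gen[OF _ _ wv_Psi(1)] quad_mkvr by metis
qed

lemma Aq_1_1: "Aq M 1 1 = Aform M C8 S8"
proof -
  have "mpow Rot 1 *v mkvr S8 C8 = mkvr C8 S8"
    unfolding mpow_Rot mk2r_mulv by (rule mkvr_cong; simp add: field_simps num_simps)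
  moreover have "transpose (mpow Rinv 1) *v cnjv (mkvr S8 C8) = mkvr C8 S8"
    unfolding mpow_Rinv cnjv_mkvr transpose_mk2r mk2r_mulv by (rule mkvr_cong; simp add: field_simps num_simps)
  ultimately show ?thesis using Aq_gen[OF _ _ wv_Psi(2)] quad_mkvr by metis
qed

lemma Aq_2_0: "Aq M 2 0 = Aform M S8 (-C8)"
proof -
  have "mpow Rot 2 *v mkvr C8 S8 = mkvr S8 (-C8)"
    unfolding mpow_Rot mk2r_mulv by (rule mkvr_cong; simp add: field_simps num_simps)
  moreover have "transpose (mpow Rinv 2) *v cnjv (mkvr C8 S8) = mkvr S8 (-C8)"
    unfolding mpow_Rinv cnjv_mkvr transpose_mk2r mk2r_mulv by (rule mkvr_cong; simp add: field_simps num_simps)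
  ultimately show ?thesis using Aq_gen[OF _ _ wv_Psi(1)] quad_mkvr by metis
qed

lemma Aq_2_1: "Aq M 2 1 = Aform M C8 (-S8)"
proof -
  have "mpow Rot 2 *v mkvr S8 C8 = mkvr C8 (-S8)"
    unfolding mpow_Rot mk2r_mulv by (rule mkvr_cong; simp add: field_simps num_simps)
  moreover have "transpose (mpow Rinv 2) *v cnjv (mkvr S8 C8) = mkvr C8 (-S8)"
    unfolding mpow_Rinv cnjv_mkvr transpose_mk2r mk2r_mulv by (rule mkvr_cong; simp add: field_simps num_simps)
  ultimately show ?thesis using Aq_gen[OF _ _ wv_Psi(2)] quad_mkvr by metis
qed

lemma Aq_3_0: "Aq M 3 0 = Aform M (-S8) (-C8)"
proof -
  have "mpow Rot 3 *v mkvr C8 S8 = mkvr (-S8) (-C8)"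
    unfolding mpow_Rot mk2r_mulv by (rule mkvr_cong; simp add: field_simps num_simps)
  moreover have "transpose (mpow Rinv 3) *v cnjv (mkvr C8 S8) = mkvr (-S8) (-C8)"
    unfolding mpow_Rinv cnjv_mkvr transpose_mk2r mk2r_mulv by (rule mkvr_cong; simp add: field_simps num_simps)
  ultimately show ?thesis using Aq_gen[OF _ _ wv_Psi(1)] quad_mkvr by metis
qed

lemma Aq_3_1: "Aq M 3 1 = Aform M S8 (-C8)"
proof -
  have "mpow Rot 3 *v mkvr S8 C8 = mkvr S8 (-C8)"
    unfolding mpow_Rot mk2r_mulv by (rule mkvr_cong; simp add: field_simps num_simps)
  moreover have "transpose (mpow Rinv 3) *v cnjv (mkvr S8 C8) = mkvr S8 (-C8)"
    unfolding mpow_Rinv cnjv_mkvr transpose_mk2r mk2r_mulv by (rule mkvr_cong; simp add: field_simps num_simps)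
  ultimately show ?thesis using Aq_gen[OF _ _ wv_Psi(2)] quad_mkvr by metis
qed

lemma Pk_0: "Filt ** mpow Rinv 0 = mk2r (t/2*C8) (t/2*(-S8)) (t/2*(-S8)) (t/2*C8)" "transpose (mpow Rot 0 ** adj Filt) = mk2r (t/2*C8) (t/2*(-S8)) (t/2*(-S8)) (t/2*C8)"
  unfolding Filt_r mpow_Rinv mpow_Rot adj_mk2r mk2r_mult transpose_mk2r
  by (rule mk2r_cong; simp add: field_simps num_simps)+
lemma Bq_0: "Bq s 0 0 = Bform s (t/2*C8) (t/2*(-S8))" "Bq s 0 1 = Bform s (t/2*(-S8)) (t/2*C8)"
  using Bq_gen[OF Pk_0] Bq_mk2r0 Bq_mk2r1 by metis+

lemma Pk_1: "Filt ** mpow Rinv 1 = mk2r (t/2*S8) (t/2*(-C8)) (t/2*S8) (t/2*C8)" "transpose (mpow Rot 1 ** adj Filt) = mk2r (t/2*S8) (t/2*(-C8)) (t/2*S8) (t/2*C8)"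
  unfolding Filt_r mpow_Rinv mpow_Rot adj_mk2r mk2r_mult transpose_mk2r
  by (rule mk2r_cong; simp add: field_simps num_simps)+
lemma Bq_1: "Bq s 1 0 = Bform s (t/2*S8) (t/2*(-C8))" "Bq s 1 1 = Bform s (t/2*S8) (t/2*C8)"
  using Bq_gen[OF Pk_1] Bq_mk2r0 Bq_mk2r1 by metis+

lemma Pk_2: "Filt ** mpow Rinv 2 = mk2r (t/2*(-S8)) (t/2*(-C8)) (t/2*C8) (t/2*S8)" "transpose (mpow Rot 2 ** adj Filt) = mk2r (t/2*(-S8)) (t/2*(-C8)) (t/2*C8) (t/2*S8)"
  unfolding Filt_r mpow_Rinv mpow_Rot adj_mk2r mk2r_mult transpose_mk2r
  by (rule mk2r_cong; simp add: field_simps num_simps)+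
lemma Bq_2: "Bq s 2 0 = Bform s (t/2*(-S8)) (t/2*(-C8))" "Bq s 2 1 = Bform s (t/2*C8) (t/2*S8)"
  using Bq_gen[OF Pk_2] Bq_mk2r0 Bq_mk2r1 by metis+

lemma Pk_3: "Filt ** mpow Rinv 3 = mk2r (t/2*(-C8)) (t/2*(-S8)) (t/2*C8) (t/2*(-S8))" "transpose (mpow Rot 3 ** adj Filt) = mk2r (t/2*(-C8)) (t/2*(-S8)) (t/2*C8) (t/2*(-S8))"
  unfolding Filt_r mpow_Rinv mpow_Rot adj_mk2r mk2r_mult transpose_mk2r
  by (rule mk2r_cong; simp add: field_simps num_simps)+
lemma Bq_3: "Bq s 3 0 = Bform s (t/2*(-C8)) (t/2*(-S8))" "Bq s 3 1 = Bform s (t/2*C8) (t/2*(-S8))"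
  using Bq_gen[OF Pk_3] Bq_mk2r0 Bq_mk2r1 by metis+

lemma key_ident:
  fixes cn sn t p q r xa xb ya yb :: real and A B :: "real \<Rightarrow> real \<Rightarrow> real"
  assumes t2: "t * t = 2" and cc: "cn * cn = (2+t)/4" and ss: "sn * sn = (2-t)/4" and cs: "cn * sn = t/4"
  assumes A_def: "\<And>al be. A al be = al * al * p + al * be * q + be * be * r"
  assumes B_def: "\<And>al be. B al be = ((al * xa+be * xb)^2 + (al * ya+be * yb)^2)/2"
  shows "(A cn sn * B (-sn) cn + A sn cn * B cn (-sn) - (A cn sn + A sn cn) * (B cn (-sn) + B (-sn) cn)/3)
       + (A cn (-sn) * B sn cn + A cn sn * B sn (-cn) - (A cn (-sn) + A cn sn) * (B sn (-cn) + B sn cn)/3)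
       + (A sn (-cn) * B cn sn + A cn (-sn) * B (-sn) (-cn) - (A sn (-cn) + A cn (-sn)) * (B (-sn) (-cn) + B cn sn)/3)
       + (A (-sn) (-cn) * B cn (-sn) + A sn (-cn) * B (-cn) (-sn) - (A (-sn) (-cn) + A sn (-cn)) * (B (-cn) (-sn) + B cn (-sn))/3)
       = 2/3 * (A xb (-xa) + A yb (-ya))"
proof -
  have sc: "sn * cn = t/4" using cs by (simp add: mult.commute)
  define X where "X = xa * xa+ya * ya" define Y where "Y = xa * xb+ya * yb" define Z where "Z = xb * xb+yb * yb"
  have e: "\<And>a b. A a b = a * a * p + a * b * q + b * b * r" "\<And>a b. B a b = (a * a * X + 2 * (a * b) * Y + b * b * Z)/2"
    by (auto simp: A_def B_def X_def Y_def Z_def power2_eq_square algebra_simps)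
  have a1: "A cn sn = ((2+t) * p + t * q + (2-t) * r)/4" "A sn cn = ((2-t) * p + t * q + (2+t) * r)/4"
     "A cn (-sn) = ((2+t) * p - t * q + (2-t) * r)/4" "A sn (-cn) = ((2-t) * p - t * q + (2+t) * r)/4"
     "A (-sn) (-cn) = ((2-t) * p + t * q + (2+t) * r)/4"
    unfolding e by (simp_all add: cc ss cs sc field_simps)
  have b1: "B cn sn = ((2+t)/4 * X + 2 * (t/4) * Y + (2-t)/4 * Z)/2" "B (-sn) cn = ((2-t)/4 * X - 2 * (t/4) * Y + (2+t)/4 * Z)/2"
    "B cn (-sn) = ((2+t)/4 * X - 2 * (t/4) * Y + (2-t)/4 * Z)/2" "B sn cn = ((2-t)/4 * X + 2 * (t/4) * Y + (2+t)/4 * Z)/2"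
    "B sn (-cn) = ((2-t)/4 * X - 2 * (t/4) * Y + (2+t)/4 * Z)/2" "B (-sn) (-cn) = ((2-t)/4 * X + 2 * (t/4) * Y + (2+t)/4 * Z)/2"
    "B (-cn) (-sn) = ((2+t)/4 * X + 2 * (t/4) * Y + (2-t)/4 * Z)/2"
    unfolding e by (simp_all add: cc ss cs sc)
  have fin: "A xb (-xa) + A yb (-ya) = Z * p - Y * q + X * r" unfolding e X_def Y_def Z_def by (simp add: algebra_simps)
  have tt: "t^2 = 2" using t2 by (simp add: power2_eq_square)
  show ?thesis unfolding a1 b1 fin
    by (simp add: field_simps tt power2_eq_square[symmetric])
qed

lemma sum4: "(\<Sum>k<4. f k) = f 0 + f 1 + f 2 + f (3::nat)"
  by (simp add: numeral_eq_Suc add.assoc)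

definition nq :: "qop \<Rightarrow> qvec \<Rightarrow> complex" where
  "nq M s = (\<Sum>k<4. Aq M k 0 * Bq s k 1 + Aq M k 1 * Bq s k 0)"
definition tq :: "qop \<Rightarrow> qvec \<Rightarrow> complex" where
  "tq M s = (\<Sum>k<4. Aq M k 0 * Bq s k 0 + Aq M k 0 * Bq s k 1 + Aq M k 1 * Bq s k 0 + Aq M k 1 * Bq s k 1)"

lemma Im_Bform: "Im (Bform s a b) = 0"
  by (simp add: Bform_def algebra_simps)
lemma Re_Bform: "Re (Bform s a b) = (a * Re (s$0) + b * Re (s$1))^2 + (a * Im (s$0) + b * Im (s$1))^2"
  by (simp add: Bform_def algebra_simps power2_eq_square)
lemma Re_Bform_h: "Re (Bform s (t/2*a) (t/2*b)) = ((a * Re (s$0) + b * Re (s$1))^2 + (a * Im (s$0) + b * Im (s$1))^2)/2"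
  unfolding Re_Bform by (simp add: power2_eq_square field_simps t2 tt2)
lemma Re_Aform: "Re (Aform M a b) = a*a*Re (M$0$0) + a*b*(Re (M$0$1) + Re (M$1$0)) + b*b*Re (M$1$1)"
  by (simp add: Aform_def algebra_simps)
lemma Aform_braket: "Aform M a b = braket (mkvr a b) (M *v mkvr a b)"
  by (simp add: Aform_def braket_def sum2 mkvr_def matrix_vector_mult_def algebra_simps)
lemma Aform_pos: "positive_op M \<Longrightarrow> Im (Aform M a b) = 0 \<and> 0 \<le> Re (Aform M a b)"
  unfolding Aform_braket positive_op_def using complex_is_Real_iff by blast

lemmas Aq_tab = Aq_0_0 Aq_0_1 Aq_1_0 Aq_1_1 Aq_2_0 Aq_2_1 Aq_3_0 Aq_3_1
lemmas Bq_tab = Bq_0 Bq_1 Bq_2 Bq_3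

definition RA :: "qop \<Rightarrow> real \<Rightarrow> real \<Rightarrow> real" where "RA M a b = Re (Aform M a b)"
definition RB :: "qvec \<Rightarrow> real \<Rightarrow> real \<Rightarrow> real" where "RB s a b = Re (Bform s (t/2*a) (t/2*b))"
lemma RA_eq: "RA M a b = a*a*Re (M$0$0) + a*b*(Re (M$0$1) + Re (M$1$0)) + b*b*Re (M$1$1)"
  by (simp add: RA_def Re_Aform)
lemma RB_eq: "RB s a b = ((a * Re (s$0) + b * Re (s$1))^2 + (a * Im (s$0) + b * Im (s$1))^2)/2"
  unfolding RB_def Re_Bform_h ..
lemma ReAq_0_0: "Re (Aq M 0 0) = RA M C8 S8" by (simp only: Aq_0_0 RA_def)
lemma ReAq_0_1: "Re (Aq M 0 1) = RA M S8 C8" by (simp only: Aq_0_1 RA_def)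
lemma ReAq_1_0: "Re (Aq M 1 0) = RA M C8 (-S8)" by (simp only: Aq_1_0 RA_def)
lemma ReAq_1_1: "Re (Aq M 1 1) = RA M C8 S8" by (simp only: Aq_1_1 RA_def)
lemma ReAq_2_0: "Re (Aq M 2 0) = RA M S8 (-C8)" by (simp only: Aq_2_0 RA_def)
lemma ReAq_2_1: "Re (Aq M 2 1) = RA M C8 (-S8)" by (simp only: Aq_2_1 RA_def)
lemma ReAq_3_0: "Re (Aq M 3 0) = RA M (-S8) (-C8)" by (simp only: Aq_3_0 RA_def)
lemma ReAq_3_1: "Re (Aq M 3 1) = RA M S8 (-C8)" by (simp only: Aq_3_1 RA_def)
lemma ReBq_0_0: "Re (Bq s 0 0) = RB s C8 (-S8)" by (simp only: Bq_0(1) RB_def)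
lemma ImBq_0_0: "Im (Bq s 0 0) = 0" by (simp only: Bq_0(1) Im_Bform)
lemma ReBq_0_1: "Re (Bq s 0 1) = RB s (-S8) C8" by (simp only: Bq_0(2) RB_def)
lemma ImBq_0_1: "Im (Bq s 0 1) = 0" by (simp only: Bq_0(2) Im_Bform)
lemma ReBq_1_0: "Re (Bq s 1 0) = RB s S8 (-C8)" by (simp only: Bq_1(1) RB_def)
lemma ImBq_1_0: "Im (Bq s 1 0) = 0" by (simp only: Bq_1(1) Im_Bform)
lemma ReBq_1_1: "Re (Bq s 1 1) = RB s S8 C8" by (simp only: Bq_1(2) RB_def)
lemma ImBq_1_1: "Im (Bq s 1 1) = 0" by (simp only: Bq_1(2) Im_Bform)
lemma ReBq_2_0: "Re (Bq s 2 0) = RB s (-S8) (-C8)" by (simp only: Bq_2(1) RB_def)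
lemma ImBq_2_0: "Im (Bq s 2 0) = 0" by (simp only: Bq_2(1) Im_Bform)
lemma ReBq_2_1: "Re (Bq s 2 1) = RB s C8 S8" by (simp only: Bq_2(2) RB_def)
lemma ImBq_2_1: "Im (Bq s 2 1) = 0" by (simp only: Bq_2(2) Im_Bform)
lemma ReBq_3_0: "Re (Bq s 3 0) = RB s (-C8) (-S8)" by (simp only: Bq_3(1) RB_def)
lemma ImBq_3_0: "Im (Bq s 3 0) = 0" by (simp only: Bq_3(1) Im_Bform)
lemma ReBq_3_1: "Re (Bq s 3 1) = RB s C8 (-S8)" by (simp only: Bq_3(2) RB_def)
lemma ImBq_3_1: "Im (Bq s 3 1) = 0" by (simp only: Bq_3(2) Im_Bform)
lemma ReAq_1_0': "Re (Aq M (Suc 0) 0) = RA M C8 (-S8)" using ReAq_1_0 by simp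
lemma ReBq_1_0': "Re (Bq s (Suc 0) 0) = RB s S8 (-C8)" using ReBq_1_0 by simp
lemma ImBq_1_0': "Im (Bq s (Suc 0) 0) = 0" using ImBq_1_0 by simp
lemma ReAq_1_1': "Re (Aq M (Suc 0) 1) = RA M C8 S8" using ReAq_1_1 by simp
lemma ReBq_1_1': "Re (Bq s (Suc 0) 1) = RB s S8 C8" using ReBq_1_1 by simp
lemma ImBq_1_1': "Im (Bq s (Suc 0) 1) = 0" using ImBq_1_1 by simp
lemmas ReAq_tab = ReAq_0_0 ReAq_0_1 ReAq_1_0 ReAq_1_1 ReAq_2_0 ReAq_2_1 ReAq_3_0 ReAq_3_1
lemmas ReBq_tab = ReBq_0_0 ImBq_0_0 ReBq_0_1 ImBq_0_1 ReBq_1_0 ImBq_1_0 ReBq_1_1 ImBq_1_1 ReBq_2_0 ImBq_2_0 ReBq_2_1 ImBq_2_1 ReBq_3_0 ImBq_3_0 ReBq_3_1 ImBq_3_1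

lemma per_i:
  "Re (nq M s) - Re (tq M s)/3 = 2/3 * (RA M (Re (s$1)) (- Re (s$0)) + RA M (Im (s$1)) (- Im (s$0)))"
proof -
  let ?A = "RA M"
  let ?B = "RB s"
  have "Re (nq M s) - Re (tq M s)/3 =
         (?A C8 S8 * ?B (-S8) C8 + ?A S8 C8 * ?B C8 (-S8) - (?A C8 S8 + ?A S8 C8)*(?B C8 (-S8) + ?B (-S8) C8)/3)
       + (?A C8 (-S8) * ?B S8 C8 + ?A C8 S8 * ?B S8 (-C8) - (?A C8 (-S8) + ?A C8 S8)*(?B S8 (-C8) + ?B S8 C8)/3)
       + (?A S8 (-C8) * ?B C8 S8 + ?A C8 (-S8) * ?B (-S8) (-C8) - (?A S8 (-C8) + ?A C8 (-S8))*(?B (-S8) (-C8) + ?B C8 S8)/3)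
       + (?A (-S8) (-C8) * ?B C8 (-S8) + ?A S8 (-C8) * ?B (-C8) (-S8) - (?A (-S8) (-C8) + ?A S8 (-C8))*(?B (-C8) (-S8) + ?B C8 (-S8))/3)"
    unfolding nq_def tq_def sum4 by (simp add: ReAq_1_0' ReAq_1_1' ReBq_1_0' ReBq_1_1' ImBq_1_0' ImBq_1_1' ReAq_tab ReBq_tab field_simps)
  also have "... = 2/3 * (?A (Re (s$1)) (- Re (s$0)) + ?A (Im (s$1)) (- Im (s$0)))"
    by (rule key_ident[OF t2 C8_2 S8_2 ccss, where p="Re (M$0$0)" and q="Re (M$0$1) + Re (M$1$0)" and r="Re (M$1$1)"
        and xa="Re (s$0)" and xb="Re (s$1)" and ya="Im (s$0)" and yb="Im (s$1)"])
       (simp_all only: RA_eq RB_eq)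
  finally show ?thesis .
qed

lemma per_i_pos: "positive_op M \<Longrightarrow> Im (tq M s) = 0 \<and> Re (tq M s) \<le> 3 * Re (nq M s)"
proof -
  assume pM: "positive_op M"
  have "Im (tq M s) = 0"
    unfolding tq_def sum4 Aq_tab Bq_tab using Aform_pos[OF pM] by (simp add: Im_Bform)
  moreover have "0 \<le> 2/3 * (RA M (Re (s$1)) (- Re (s$0)) + RA M (Im (s$1)) (- Im (s$0)))"
    using Aform_pos[OF pM] by (simp add: RA_def)
  ultimately show ?thesis using per_i[of M s] by linarith
qed

lemma rho_diag: "(rhoAB J M \<sigma>)$(a,b)$(a,b) = (\<Sum>k<4. \<Sum>i<J. Aq (M i) k a * Bq (\<sigma> i) k b)"
  unfolding rhoAB_def Aq_def Bq_def by (simp add: kron_def)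

lemma bk: "braket (kronv (mkvr a b) (mkvr c d)) (X *v kronv (mkvr a b) (mkvr c d)) =
   (\<Sum>p\<in>UNIV. \<Sum>q\<in>UNIV. cnj (kronv (mkvr a b) (mkvr c d) $ p) * X$p$q * kronv (mkvr a b) (mkvr c d) $ q)"
  by (simp add: braket_def matrix_vector_mult_def sum_distrib_left mult.assoc)

lemma bk01: "braket (kronv z0 z1) (X *v kronv z0 z1) = X$(0,1)$(0,1)"
  unfolding z0r z1r bk by (simp add: sum_pair sum2 kronv_def mkvr_def)
lemma bk10: "braket (kronv z1 z0) (X *v kronv z1 z0) = X$(1,0)$(1,0)"
  unfolding z0r z1r bk by (simp add: sum_pair sum2 kronv_def mkvr_def)
lemma trace4: "trace (X::qop2) = X$(0,0)$(0,0) + X$(0,1)$(0,1) + X$(1,0)$(1,0) + X$(1,1)$(1,1)"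
  by (simp add: trace_def sum_pair sum2 add.assoc)

lemma numer: "(rhoAB J M \<sigma>)$(0,1)$(0,1) + (rhoAB J M \<sigma>)$(1,0)$(1,0) = (\<Sum>i<J. nq (M i) (\<sigma> i))"
  unfolding rho_diag nq_def
  by (simp only: sum.distrib[symmetric]) (rule sum.swap)

lemma trac: "trace (rhoAB J M \<sigma>) = (\<Sum>i<J. tq (M i) (\<sigma> i))"
  unfolding trace4 rho_diag tq_def
  by (simp only: sum.distrib[symmetric]) (rule sum.swap)

lemma tq_expand: "Re (tq M s) =
    RA M C8 S8 * RB s C8 (-S8) + RA M C8 S8 * RB s (-S8) C8 + RA M S8 C8 * RB s C8 (-S8) + RA M S8 C8 * RB s (-S8) C8
  + RA M C8 (-S8) * RB s S8 (-C8) + RA M C8 (-S8) * RB s S8 C8 + RA M C8 S8 * RB s S8 (-C8) + RA M C8 S8 * RB s S8 C8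
  + RA M S8 (-C8) * RB s (-S8) (-C8) + RA M S8 (-C8) * RB s C8 S8 + RA M C8 (-S8) * RB s (-S8) (-C8) + RA M C8 (-S8) * RB s C8 S8
  + RA M (-S8) (-C8) * RB s (-C8) (-S8) + RA M (-S8) (-C8) * RB s C8 (-S8) + RA M S8 (-C8) * RB s (-C8) (-S8) + RA M S8 (-C8) * RB s C8 (-S8)"
  unfolding tq_def sum4 by (simp add: ReAq_1_0' ReAq_1_1' ReBq_1_0' ReBq_1_1' ImBq_1_0' ImBq_1_1' ReAq_tab ReBq_tab)

lemma pos_diag: "0 \<le> a \<Longrightarrow> 0 \<le> d \<Longrightarrow> positive_op (mk2r a 0 0 d)"
proof -
  assume a: "0 \<le> a" "0 \<le> d"
  have e: "braket v (mk2r a 0 0 d *v v) = of_real (a * (Re (v$0)^2 + Im (v$0)^2) + d * (Re (v$1)^2 + Im (v$1)^2))" for v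
    by (simp add: braket_def sum2 matrix_vector_mult_def mk2r_def complex_eq_iff algebra_simps power2_eq_square)
  show ?thesis unfolding positive_op_def e using a by simp
qed

theorem theorem4:
  shows "(\<forall>J Mvac M \<sigma>. valid_attack J Mvac M \<sigma> \<and> Re (trace (rhoAB J M \<sigma>)) > 0
            \<longrightarrow> bit_error (rhoAB J M \<sigma>) \<ge> 1/3)
       \<and> (\<exists>J Mvac M \<sigma>. valid_attack J Mvac M \<sigma> \<and> Re (trace (rhoAB J M \<sigma>)) > 0
            \<and> bit_error (rhoAB J M \<sigma>) = 1/3)"
proof
  show "\<forall>J Mvac M \<sigma>. valid_attack J Mvac M \<sigma> \<and> Re (trace (rhoAB J M \<sigma>)) > 0
            \<longrightarrow> bit_error (rhoAB J M \<sigma>) \<ge> 1/3"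
  proof (intro allI impI, elim conjE)
    fix J Mvac M \<sigma>
    assume va: "valid_attack J Mvac M \<sigma>" and tp: "Re (trace (rhoAB J M \<sigma>)) > 0"
    let ?N = "\<Sum>i<J. nq (M i) (\<sigma> i)"
    let ?T = "\<Sum>i<J. tq (M i) (\<sigma> i)"
    have pos: "\<And>i. i < J \<Longrightarrow> positive_op (M i)" using va by (simp add: valid_attack_def)
    have imT: "Im ?T = 0" using per_i_pos[OF pos] by (simp add: Im_sum)
    have "Re ?T = (\<Sum>i<J. Re (tq (M i) (\<sigma> i)))" by (simp add: Re_sum)
    also have "... \<le> (\<Sum>i<J. 3 * Re (nq (M i) (\<sigma> i)))"
      by (rule sum_mono) (use per_i_pos[OF pos] in auto)
    also have "... = 3 * Re ?N" by (simp add: Re_sum sum_distrib_left)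
    finally have le: "Re ?T \<le> 3 * Re ?N" .
    have Tpos: "Re ?T > 0" using tp by (simp add: trac)
    have Treal: "?T = of_real (Re ?T)" using imT by (simp add: complex_eq_iff)
    have "bit_error (rhoAB J M \<sigma>) = Re (?N / ?T)"
      unfolding bit_error_def bk01 bk10 numer trac ..
    also have "... = Re ?N / Re ?T" by (subst Treal) (simp add: Re_divide_of_real)
    finally have be: "bit_error (rhoAB J M \<sigma>) = Re ?N / Re ?T" .
    have "1/3 \<le> Re ?N / Re ?T" using le Tpos by (simp add: le_divide_eq)
    then show "bit_error (rhoAB J M \<sigma>) \<ge> 1/3" using be by simp
  qed
next
  let ?M = "\<lambda>i::nat. mk2r 1 0 0 0"
  let ?s = "\<lambda>i::nat. mkvr 1 0"
  have va: "valid_attack 1 (mk2r 0 0 0 1) ?M ?s"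
    unfolding valid_attack_def
    by (simp add: pos_diag mk2r_add mat1_mk2r norm_vec_def L2_set_def sum2 mkvr_def)
  have pi: "Re (nq (?M 0) (?s 0)) - Re (tq (?M 0) (?s 0))/3 = 0"
    unfolding per_i by (simp add: RA_eq mkvr_def mk2r_def)
  have tpos: "Re (tq (?M 0) (?s 0)) > 0"
    unfolding tq_expand RA_eq RB_eq using cc_pos ss_pos by (simp add: mkvr_def mk2r_def) (intro add_pos_pos mult_pos_pos zero_less_power; simp)
  show "\<exists>J Mvac M \<sigma>. valid_attack J Mvac M \<sigma> \<and> Re (trace (rhoAB J M \<sigma>)) > 0
            \<and> bit_error (rhoAB J M \<sigma>) = 1/3"
  proof (intro exI conjI)
    show "valid_attack 1 (mk2r 0 0 0 1) ?M ?s" by (rule va)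
    show "Re (trace (rhoAB 1 ?M ?s)) > 0" using tpos by (simp add: trac)
    have Treal: "tq (?M 0) (?s 0) = of_real (Re (tq (?M 0) (?s 0)))"
      using per_i_pos[OF pos_diag] by (simp add: complex_eq_iff)
    have "bit_error (rhoAB 1 ?M ?s) = Re (nq (?M 0) (?s 0) / tq (?M 0) (?s 0))"
      unfolding bit_error_def bk01 bk10 numer trac by simp
    also have "... = Re (nq (?M 0) (?s 0)) / Re (tq (?M 0) (?s 0))" by (subst Treal) (simp add: Re_divide_of_real)
    finally have be: "bit_error (rhoAB 1 ?M ?s) = Re (nq (?M 0) (?s 0)) / Re (tq (?M 0) (?s 0))" .
    have "Re (nq (?M 0) (?s 0)) = Re (tq (?M 0) (?s 0)) / 3" using pi by simp
    then have "Re (nq (?M 0) (?s 0)) / Re (tq (?M 0) (?s 0)) = 1/3" using tpos by simp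
    then show "bit_error (rhoAB 1 ?M ?s) = 1/3" using be by simp
  qed
qed

end
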